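(* Let pieces have length $a=2$. There is a bijective correspondence between pyramids of size $m\geq 1$ (with bottom piece covering $]0,2[$) and finite sequences $(p_1,p_2,\dots,p_r)$, $r\geq 1$, of pyramids such that $p_i$ is a right $0$-pyramid if $i$ is odd and a left $1$-pyramid if $i$ is even, and such that $|p_1|+\dots+|p_r|=m$.
   Context: A piece is an open interval $]s,s+a[$ of the real line with $s\in\mathbb Z$ (here $a=2$, so pieces are dimers); two pieces are concurrent iff their intervals intersect. A heap (in the sense of Viennot) is a finite configuration obtained by successively dropping pieces vertically towards the horizontal axis: each dropped piece comes to rest either on the axis or on top of the highest previously placed piece whose interval intersects its own; two dropping orders give the same heap iff they produce the same configuration. A heap is a pyramid if it has a unique bottom (minimal) piece, i.e. exactly one piece rests on the axis. The size $|p|$ is the number of pieces. A pyramid $p$ is a right $s$-pyramid if its bottom piece covers $]s,s+a[$ and is a leftmost piece of $p$ (no piece of $p$ covers $]t,t+a[$ with $t<s$). It is a left $s$-pyramid if its bottom piece covers $]s-a,s[$ and is a rightmost piece of $p$ (no piece of $p$ covers $]t-a,t[$ with $t>s$). *)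

theory Defs
  imports Main
begin

text \<open>A placed piece is a pair (s, h): it covers the open
interval ]s, s+2[ and rests at level h (level 0 = on the horizontal axis).
A heap is the configuration (finite set of placed pieces) obtained by successively
dropping pieces; two dropping orders give the same heap iff they give the same
configuration, so heaps are identified with reachable configurations.\<close>

definition piece_len :: int where "piece_len = 2"

definition concurrent :: "int \<Rightarrow> int \<Rightarrow> bool" where
  "concurrent s t \<longleftrightarrow> \<bar>s - t\<bar> < piece_len"

definition drop_piece :: "(int \<times> nat) set \<Rightarrow> int \<Rightarrow> (int \<times> nat) set" where
  "drop_piece H s =
     insert (s, (if (\<exists>(t,h)\<in>H. concurrent s t)
                 then Suc (Max {h. \<exists>t. (t,h) \<in> H \<and> concurrent s t})
                 else 0)) H"

inductive heap :: "(int \<times> nat) set \<Rightarrow> bool" where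
  heap_empty: "heap {}"
| heap_drop: "heap H \<Longrightarrow> heap (drop_piece H s)"

definition heap_size :: "(int \<times> nat) set \<Rightarrow> nat" where
  "heap_size H = card H"

text \<open>Minimal pieces of a heap are exactly those resting on the axis.\<close>
definition pyramid :: "(int \<times> nat) set \<Rightarrow> bool" where
  "pyramid p \<longleftrightarrow> heap p \<and> (\<exists>!x. x \<in> p \<and> snd x = 0)"

definition right_pyramid :: "int \<Rightarrow> (int \<times> nat) set \<Rightarrow> bool" where
  "right_pyramid s p \<longleftrightarrow> pyramid p \<and> (s, 0) \<in> p \<and> (\<forall>(t,h)\<in>p. s \<le> t)"

text \<open>Left s-pyramid: bottom piece covers ]s-2, s[ and no piece lies further right.\<close>
definition left_pyramid :: "int \<Rightarrow> (int \<times> nat) set \<Rightarrow> bool" where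
  "left_pyramid s p \<longleftrightarrow> pyramid p \<and> (s - piece_len, 0) \<in> p \<and> (\<forall>(t,h)\<in>p. t \<le> s - piece_len)"

end

theory Submission
  imports Defs "HOL-Library.Equipollence"
begin


lemma conc_iff: "concurrent s t \<longleftrightarrow> \<bar>s - t\<bar> < 2"
  by (simp add: concurrent_def piece_len_def)

lemma conc_sym: "concurrent s t \<longleftrightarrow> concurrent t s"
  by (auto simp: conc_iff)

lemma conc_refl[simp]: "concurrent s s"
  by (simp add: conc_iff)

definition Hc :: "(int \<times> nat) set \<Rightarrow> bool" where
  "Hc H \<longleftrightarrow> finite H \<and>
     (\<forall>x\<in>H. \<forall>y\<in>H. x \<noteq> y \<and> concurrent (fst x) (fst y) \<longrightarrow> snd x \<noteq> snd y) \<and>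
     (\<forall>x\<in>H. 0 < snd x \<longrightarrow> (\<exists>y\<in>H. concurrent (fst x) (fst y) \<and> snd y = snd x - 1))"

lemma heap_Hc: "heap H \<Longrightarrow> Hc H"
proof (induction rule: heap.induct)
  case heap_empty
  then show ?case by (simp add: Hc_def)
next
  case (heap_drop H s)
  let ?S = "{h. \<exists>t. (t,h) \<in> H \<and> concurrent s t}"
  have fin: "finite H" using heap_drop.IH by (simp add: Hc_def)
  have finS: "finite ?S"
  proof -
    have "?S \<subseteq> snd ` H" by force
    then show ?thesis using fin finite_subset by blast
  qed
  define l where "l = (if (\<exists>(t,h)\<in>H. concurrent s t) then Suc (Max ?S) else 0)"
  have dp: "drop_piece H s = insert (s,l) H" unfolding drop_piece_def l_def by simp
  have lt: "snd y < l" if "y \<in> H" "concurrent s (fst y)" for y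
  proof -
    have ex: "\<exists>(t,h)\<in>H. concurrent s t" using that by (cases y) auto
    have "snd y \<in> ?S" using that by (cases y) auto
    then have "snd y \<le> Max ?S" using finS by simp
    then show ?thesis using ex by (simp add: l_def)
  qed
  have sup: "\<exists>y\<in>H. concurrent s (fst y) \<and> snd y = l - 1" if "0 < l"
  proof -
    have ex: "\<exists>(t,h)\<in>H. concurrent s t" using that by (auto simp: l_def split: if_splits)
    then have ne: "?S \<noteq> {}" by auto
    have "Max ?S \<in> ?S" using Max_in[OF finS ne] .
    then obtain t where "(t, Max ?S) \<in> H" "concurrent s t" by auto
    moreover have "l - 1 = Max ?S" using ex by (simp add: l_def)
    ultimately show ?thesis by force
  qed
  show ?case unfolding dp Hc_def
  proof (intro conjI ballI impI)
    show "finite (insert (s, l) H)" using fin by simp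
  next
    fix x y assume x: "x \<in> insert (s,l) H" and y: "y \<in> insert (s,l) H"
      and c: "x \<noteq> y \<and> concurrent (fst x) (fst y)"
    show "snd x \<noteq> snd y"
    proof (cases "x = (s,l)")
      case True
      then have "y \<in> H" using y c by auto
      then show ?thesis using lt[of y] c True by auto
    next
      case False
      then have xH: "x \<in> H" using x by auto
      show ?thesis
      proof (cases "y = (s,l)")
        case True
        then show ?thesis using lt[OF xH] c conc_sym by fastforce
      next
        case False
        then have "y \<in> H" using y by auto
        then show ?thesis using xH c heap_drop.IH by (auto simp: Hc_def)
      qed
    qed
  next
    fix x assume x: "x \<in> insert (s,l) H" and p: "0 < snd x"
    show "\<exists>y\<in>insert (s, l) H. concurrent (fst x) (fst y) \<and> snd y = snd x - 1"
    proof (cases "x = (s,l)")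
      case True
      then show ?thesis using sup p by auto
    next
      case False
      then have "x \<in> H" using x by auto
      then show ?thesis using heap_drop.IH p unfolding Hc_def by blast
    qed
  qed
qed

lemma Hc_heap: "Hc H \<Longrightarrow> heap H"
proof (induction "card H" arbitrary: H rule: less_induct)
  case less
  show ?case
  proof (cases "H = {}")
    case True
    then show ?thesis by (simp add: heap_empty)
  next
    case False
    have fin: "finite H" using less.prems by (simp add: Hc_def)
    have "Max (snd ` H) \<in> snd ` H" using fin False by simp
    then obtain x where xH: "x \<in> H" and xm: "snd x = Max (snd ` H)" by auto
    have le: "snd y \<le> snd x" if "y \<in> H" for y using that fin xm by simp
    define H' where "H' = H - {x}"
    have HcH': "Hc H'"
      unfolding Hc_def
    proof (intro conjI ballI impI)
      show "finite H'" using fin by (simp add: H'_def)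
    next
      fix a b assume "a \<in> H'" "b \<in> H'" "a \<noteq> b \<and> concurrent (fst a) (fst b)"
      then show "snd a \<noteq> snd b" using less.prems by (auto simp: Hc_def H'_def)
    next
      fix a assume a: "a \<in> H'" "0 < snd a"
      then obtain y where y: "y \<in> H" "concurrent (fst a) (fst y)" "snd y = snd a - 1"
        using less.prems unfolding Hc_def H'_def by blast
      have "y \<noteq> x" using le[of a] a y by (auto simp: H'_def)
      then show "\<exists>y\<in>H'. concurrent (fst a) (fst y) \<and> snd y = snd a - 1" using y by (auto simp: H'_def)
    qed
    have "card H' < card H" unfolding H'_def by (rule card_Diff1_less[OF fin xH])
    then have hH': "heap H'" using less.hyps HcH' by blast
    have lt: "snd y < snd x" if "y \<in> H'" "concurrent (fst x) (fst y)" for y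
    proof -
      have "y \<noteq> x" "y \<in> H" using that by (auto simp: H'_def)
      then have "snd x \<noteq> snd y" using that xH less.prems by (auto simp: Hc_def)
      then show ?thesis using le[OF \<open>y \<in> H\<close>] by simp
    qed
    let ?S = "{h. \<exists>t. (t,h) \<in> H' \<and> concurrent (fst x) t}"
    have finS: "finite ?S"
    proof -
      have "?S \<subseteq> snd ` H'" by force
      moreover have "finite (snd ` H')" using fin by (simp add: H'_def)
      ultimately show ?thesis using finite_subset by blast
    qed
    have eq: "(if (\<exists>(t,h)\<in>H'. concurrent (fst x) t) then Suc (Max ?S) else 0) = snd x"
    proof (cases "snd x = 0")
      case True
      then have "\<not> (\<exists>(t,h)\<in>H'. concurrent (fst x) t)" using lt by fastforce
      then show ?thesis using True by simp
    next
      case False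
      then obtain y where y: "y \<in> H" "concurrent (fst x) (fst y)" "snd y = snd x - 1"
        using less.prems xH unfolding Hc_def by blast
      have yH': "y \<in> H'" using y False by (auto simp: H'_def)
      have ex: "\<exists>(t,h)\<in>H'. concurrent (fst x) t" using yH' y by (cases y) auto
      have "snd y \<in> ?S" using yH' y by (cases y) auto
      then have m1: "snd y \<le> Max ?S" using finS by simp
      have ne: "?S \<noteq> {}" using \<open>snd y \<in> ?S\<close> by blast
      have "Max ?S \<in> ?S" using Max_in[OF finS ne] .
      then obtain t where "(t, Max ?S) \<in> H'" "concurrent (fst x) t" by auto
      then have "Max ?S < snd x" using lt by fastforce
      then show ?thesis using ex m1 y False by simp
    qed
    have "drop_piece H' (fst x) = H"
      unfolding drop_piece_def eq using xH by (cases x) (auto simp: H'_def)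
    then show ?thesis using heap_drop[OF hH', of "fst x"] by simp
  qed
qed

lemma heap_iff_Hc: "heap H \<longleftrightarrow> Hc H"
  using heap_Hc Hc_heap by blast


function lvl :: "(int \<times> nat) set \<Rightarrow> (int \<times> nat) set \<Rightarrow> int \<times> nat \<Rightarrow> nat" where
  "lvl B Q x = Max (insert 0 ((\<lambda>y. Suc (snd y)) ` {y\<in>B. concurrent (fst x) (fst y)}
      \<union> (\<lambda>y. Suc (lvl B Q y)) ` {y\<in>Q. concurrent (fst x) (fst y) \<and> snd y < snd x}))"
  by pat_completeness auto
termination by (relation "measure (\<lambda>(B,Q,x). snd x)") auto

declare lvl.simps[simp del]

lemma lvl_fin:
  assumes "finite B" "finite Q"
  shows "finite (insert 0 ((\<lambda>y. Suc (snd y)) ` {y\<in>B. concurrent (fst x) (fst y)}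
      \<union> (\<lambda>y. Suc (lvl B Q y)) ` {y\<in>Q. concurrent (fst x) (fst y) \<and> snd y < snd x}))"
  using assms by simp

lemma lvl_B:
  assumes "finite B" "finite Q" "y \<in> B" "concurrent (fst x) (fst y)"
  shows "snd y < lvl B Q x"
proof -
  have "Suc (snd y) \<le> lvl B Q x"
    apply (subst lvl.simps)
    apply (rule Max_ge[OF lvl_fin[OF assms(1,2)]])
    using assms by blast
  then show ?thesis by simp
qed

lemma lvl_Q:
  assumes "finite B" "finite Q" "y \<in> Q" "concurrent (fst x) (fst y)" "snd y < snd x"
  shows "lvl B Q y < lvl B Q x"
proof -
  have "Suc (lvl B Q y) \<le> lvl B Q x"
    apply (subst (2) lvl.simps)
    apply (rule Max_ge[OF lvl_fin[OF assms(1,2)]])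
    using assms by blast
  then show ?thesis by simp
qed

lemma lvl_pos:
  assumes "finite B" "finite Q" "0 < lvl B Q x"
  shows "(\<exists>y\<in>B. concurrent (fst x) (fst y) \<and> Suc (snd y) = lvl B Q x) \<or>
         (\<exists>y\<in>Q. concurrent (fst x) (fst y) \<and> snd y < snd x \<and> Suc (lvl B Q y) = lvl B Q x)"
proof -
  let ?M = "insert 0 ((\<lambda>y. Suc (snd y)) ` {y\<in>B. concurrent (fst x) (fst y)}
      \<union> (\<lambda>y. Suc (lvl B Q y)) ` {y\<in>Q. concurrent (fst x) (fst y) \<and> snd y < snd x})"
  have e: "lvl B Q x = Max ?M" by (rule lvl.simps)
  have "Max ?M \<in> ?M" by (rule Max_in[OF lvl_fin[OF assms(1,2)]]) simp
  then show ?thesis using assms(3) unfolding e[symmetric] by auto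
qed

definition dropon :: "(int \<times> nat) set \<Rightarrow> (int \<times> nat) set \<Rightarrow> (int \<times> nat) set" where
  "dropon B Q = (\<lambda>x. (fst x, lvl B Q x)) ` Q"

definition wq :: "(int \<times> nat) set \<Rightarrow> bool" where
  "wq Q \<longleftrightarrow> finite Q \<and> (\<forall>x\<in>Q. \<forall>y\<in>Q. x \<noteq> y \<and> concurrent (fst x) (fst y) \<longrightarrow> snd x \<noteq> snd y)"

lemma Hc_wq: "Hc H \<Longrightarrow> wq H"
  by (simp add: Hc_def wq_def)

lemma lvl_order:
  assumes "finite B" "wq Q" "x \<in> Q" "y \<in> Q" "concurrent (fst x) (fst y)"
  shows "snd y < snd x \<longleftrightarrow> lvl B Q y < lvl B Q x"
proof
  have fQ: "finite Q" using assms by (simp add: wq_def)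
  show "snd y < snd x \<Longrightarrow> lvl B Q y < lvl B Q x" using lvl_Q[OF assms(1) fQ assms(4,5)] by simp
  assume l: "lvl B Q y < lvl B Q x"
  show "snd y < snd x"
  proof (rule ccontr)
    assume "\<not> snd y < snd x"
    then consider "snd x < snd y" | "snd x = snd y" by linarith
    then show False
    proof cases
      case 1
      then show ?thesis using lvl_Q[OF assms(1) fQ assms(3), of y] assms(5) conc_sym l by auto
    next
      case 2
      then have "x = y" using assms unfolding wq_def by blast
      then show ?thesis using l by simp
    qed
  qed
qed

lemma lvl_inj:
  assumes "finite B" "wq Q"
  shows "inj_on (\<lambda>x. (fst x, lvl B Q x)) Q"
proof (rule inj_onI)
  fix x y assume x: "x \<in> Q" and y: "y \<in> Q" and e: "(fst x, lvl B Q x) = (fst y, lvl B Q y)"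
  show "x = y"
  proof (rule ccontr)
    assume ne: "x \<noteq> y"
    have c: "concurrent (fst x) (fst y)" using e by simp
    then have "snd x \<noteq> snd y" using ne x y assms(2) unfolding wq_def by blast
    then have "snd y < snd x \<or> snd x < snd y" by linarith
    then show False using lvl_order[OF assms x y c] lvl_order[OF assms y x] c conc_sym e by auto
  qed
qed

lemma Hc_compose:
  assumes "Hc B" "wq Q"
  shows "Hc (B \<union> dropon B Q)" and "B \<inter> dropon B Q = {}"
proof -
  have fB: "finite B" using assms by (simp add: Hc_def)
  have fQ: "finite Q" using assms by (simp add: wq_def)
  show "B \<inter> dropon B Q = {}"
  proof (rule ccontr)
    assume "B \<inter> dropon B Q \<noteq> {}"
    then obtain x where "x \<in> Q" "(fst x, lvl B Q x) \<in> B" by (auto simp: dropon_def)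
    then show False using lvl_B[OF fB fQ, of "(fst x, lvl B Q x)" x] by simp
  qed
  show "Hc (B \<union> dropon B Q)"
    unfolding Hc_def
  proof (intro conjI ballI impI)
    show "finite (B \<union> dropon B Q)" using fB fQ by (simp add: dropon_def)
  next
    fix a b assume a: "a \<in> B \<union> dropon B Q" and b: "b \<in> B \<union> dropon B Q"
      and c: "a \<noteq> b \<and> concurrent (fst a) (fst b)"
    show "snd a \<noteq> snd b"
    proof (cases "a \<in> B")
      case aB: True
      show ?thesis
      proof (cases "b \<in> B")
        case True
        then show ?thesis using aB c assms(1) by (auto simp: Hc_def)
      next
        case False
        then obtain y where "y \<in> Q" "b = (fst y, lvl B Q y)" using b by (auto simp: dropon_def)
        then show ?thesis using lvl_B[OF fB fQ aB, of y] c conc_sym by auto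
      qed
    next
      case False
      then obtain x where x: "x \<in> Q" "a = (fst x, lvl B Q x)" using a by (auto simp: dropon_def)
      show ?thesis
      proof (cases "b \<in> B")
        case True
        then show ?thesis using lvl_B[OF fB fQ True, of x] c x by auto
      next
        case False
        then obtain y where y: "y \<in> Q" "b = (fst y, lvl B Q y)" using b by (auto simp: dropon_def)
        have cxy: "concurrent (fst x) (fst y)" using c x y by simp
        have "x \<noteq> y" using c x y by auto
        then have "snd x \<noteq> snd y" using x y cxy assms(2) unfolding wq_def by blast
        then have "snd y < snd x \<or> snd x < snd y" by linarith
        then show ?thesis using lvl_order[OF fB assms(2) x(1) y(1) cxy]
            lvl_order[OF fB assms(2) y(1) x(1)] cxy conc_sym x y by auto
      qed
    qed
  next
    fix a assume a: "a \<in> B \<union> dropon B Q" and p: "0 < snd a"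
    show "\<exists>y\<in>B \<union> dropon B Q. concurrent (fst a) (fst y) \<and> snd y = snd a - 1"
    proof (cases "a \<in> B")
      case True
      then show ?thesis using assms(1) p unfolding Hc_def by blast
    next
      case False
      then obtain x where x: "x \<in> Q" "a = (fst x, lvl B Q x)" using a by (auto simp: dropon_def)
      have "0 < lvl B Q x" using p x by simp
      from lvl_pos[OF fB fQ this] show ?thesis
      proof
        assume "\<exists>y\<in>B. concurrent (fst x) (fst y) \<and> Suc (snd y) = lvl B Q x"
        then show ?thesis using x by force
      next
        assume "\<exists>y\<in>Q. concurrent (fst x) (fst y) \<and> snd y < snd x \<and> Suc (lvl B Q y) = lvl B Q x"
        then obtain y where y: "y \<in> Q" "concurrent (fst x) (fst y)" "Suc (lvl B Q y) = lvl B Q x" by blast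
        have "(fst y, lvl B Q y) \<in> dropon B Q" using y by (auto simp: dropon_def)
        then show ?thesis using x y by (intro bexI[of _ "(fst y, lvl B Q y)"]) auto
      qed
    qed
  qed
qed


lemma Hc_dist: "Hc H \<Longrightarrow> x \<in> H \<Longrightarrow> y \<in> H \<Longrightarrow> x \<noteq> y \<Longrightarrow> concurrent (fst x) (fst y) \<Longrightarrow> snd x \<noteq> snd y"
  unfolding Hc_def by blast

lemma Hc_supp: "Hc H \<Longrightarrow> x \<in> H \<Longrightarrow> 0 < snd x \<Longrightarrow> \<exists>y\<in>H. concurrent (fst x) (fst y) \<and> snd y = snd x - 1"
  unfolding Hc_def by blast

lemma Hc_fin: "Hc H \<Longrightarrow> finite H"
  unfolding Hc_def by blast



lemma lvl_invar:
  assumes fB: "finite B" and fQ: "finite Q" and inj: "inj_on \<sigma> Q"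
    and fs: "\<forall>x\<in>Q. fst (\<sigma> x) = fst x"
    and ord: "\<forall>x\<in>Q. \<forall>y\<in>Q. concurrent (fst x) (fst y) \<longrightarrow> (snd y < snd x \<longleftrightarrow> snd (\<sigma> y) < snd (\<sigma> x))"
  shows "x \<in> Q \<Longrightarrow> lvl B (\<sigma> ` Q) (\<sigma> x) = lvl B Q x"
proof (induction "snd x" arbitrary: x rule: less_induct)
  case less
  have S: "{y\<in>\<sigma> ` Q. concurrent (fst (\<sigma> x)) (fst y) \<and> snd y < snd (\<sigma> x)}
     = \<sigma> ` {y\<in>Q. concurrent (fst x) (fst y) \<and> snd y < snd x}"
  proof (intro equalityI subsetI)
    fix z assume z: "z \<in> {y\<in>\<sigma> ` Q. concurrent (fst (\<sigma> x)) (fst y) \<and> snd y < snd (\<sigma> x)}"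
    then obtain y where y: "y \<in> Q" "z = \<sigma> y" by blast
    have c: "concurrent (fst x) (fst y)" using z y fs less.prems by simp
    have "snd (\<sigma> y) < snd (\<sigma> x)" using z y by simp
    then have "snd y < snd x" using y(1) ord less.prems c by blast
    then show "z \<in> \<sigma> ` {y\<in>Q. concurrent (fst x) (fst y) \<and> snd y < snd x}" using y c by blast
  next
    fix z assume z: "z \<in> \<sigma> ` {y\<in>Q. concurrent (fst x) (fst y) \<and> snd y < snd x}"
    then obtain y where y: "y \<in> Q" "z = \<sigma> y" "concurrent (fst x) (fst y)" "snd y < snd x" by blast
    have "snd (\<sigma> y) < snd (\<sigma> x)" using y ord less.prems by blast
    moreover have "concurrent (fst (\<sigma> x)) (fst (\<sigma> y))" using y fs less.prems by simp
    ultimately show "z \<in> {y\<in>\<sigma> ` Q. concurrent (fst (\<sigma> x)) (fst y) \<and> snd y < snd (\<sigma> x)}" using y by blast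
  qed
  have I: "(\<lambda>y. Suc (lvl B (\<sigma> ` Q) y)) ` \<sigma> ` {y\<in>Q. concurrent (fst x) (fst y) \<and> snd y < snd x}
     = (\<lambda>y. Suc (lvl B Q y)) ` {y\<in>Q. concurrent (fst x) (fst y) \<and> snd y < snd x}"
    unfolding image_image using less.hyps by (intro image_cong) auto
  show ?case
    apply (subst lvl.simps)
    apply (subst (2) lvl.simps)
    unfolding S I using fs less.prems by simp
qed

lemma dropon_dropon:
  assumes "finite B" "finite B'" "wq Q"
  shows "dropon B (dropon B' Q) = dropon B Q"
proof -
  let ?s = "\<lambda>x. (fst x, lvl B' Q x)"
  have fQ: "finite Q" using assms by (simp add: wq_def)
  have inj: "inj_on ?s Q" by (rule lvl_inj[OF assms(2,3)])
  have ord: "\<forall>x\<in>Q. \<forall>y\<in>Q. concurrent (fst x) (fst y) \<longrightarrow> (snd y < snd x \<longleftrightarrow> snd (?s y) < snd (?s x))"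
    using lvl_order[OF assms(2,3)] by simp
  have "lvl B (?s ` Q) (?s x) = lvl B Q x" if "x \<in> Q" for x
    by (rule lvl_invar[OF assms(1) fQ inj _ ord that]) simp
  then show ?thesis unfolding dropon_def image_image by (intro image_cong) auto
qed

lemma lvl_restore:
  assumes H: "Hc H" and DH: "D \<subseteq> H"
    and down: "\<forall>x\<in>H. \<forall>y\<in>D. concurrent (fst x) (fst y) \<and> snd x < snd y \<longrightarrow> x \<in> D"
  shows "x \<in> H - D \<Longrightarrow> lvl D (H - D) x = snd x"
proof (induction "snd x" arbitrary: x rule: less_induct)
  case less
  have fH: "finite H" using H by (simp add: Hc_def)
  have fD: "finite D" using fH DH finite_subset by blast
  have fU: "finite (H - D)" using fH by simp
  have ge: "snd x \<le> lvl D (H - D) x"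
  proof (cases "snd x = 0")
    case False
    then obtain y where y: "y \<in> H" "concurrent (fst x) (fst y)" "snd y = snd x - 1"
      using Hc_supp[OF H, of x] less.prems by auto
    show ?thesis
    proof (cases "y \<in> D")
      case True
      then show ?thesis using lvl_B[OF fD fU True y(2)] y False by simp
    next
      case False
      then have yU: "y \<in> H - D" using y by simp
      have "snd y < snd x" using y \<open>snd x \<noteq> 0\<close> by simp
      then have "lvl D (H - D) y < lvl D (H - D) x" using lvl_Q[OF fD fU yU y(2)] by simp
      moreover have "lvl D (H - D) y = snd y" using less.hyps[OF \<open>snd y < snd x\<close> yU] .
      ultimately show ?thesis using y \<open>snd x \<noteq> 0\<close> by simp
    qed
  qed simp
  have le: "lvl D (H - D) x \<le> snd x"
  proof (cases "lvl D (H - D) x = 0")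
    case False
    then have "0 < lvl D (H - D) x" by simp
    from lvl_pos[OF fD fU this] show ?thesis
    proof
      assume "\<exists>y\<in>D. concurrent (fst x) (fst y) \<and> Suc (snd y) = lvl D (H - D) x"
      then obtain y where y: "y \<in> D" "concurrent (fst x) (fst y)" "Suc (snd y) = lvl D (H - D) x" by blast
      have "y \<noteq> x" using y less.prems by auto
      have yH: "y \<in> H" using y DH by blast
      have xH: "x \<in> H" using less.prems by blast
      have "snd x \<noteq> snd y" using Hc_dist[OF H xH yH] \<open>y \<noteq> x\<close> y(2) by metis
      moreover have "\<not> snd x < snd y"
      proof
        assume "snd x < snd y"
        then have "x \<in> D" using down xH y(1,2) by blast
        then show False using less.prems by blast
      qed
      ultimately show ?thesis using y by simp
    next
      assume "\<exists>y\<in>H - D. concurrent (fst x) (fst y) \<and> snd y < snd x \<and> Suc (lvl D (H - D) y) = lvl D (H - D) x"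
      then obtain y where y: "y \<in> H - D" "snd y < snd x" "Suc (lvl D (H - D) y) = lvl D (H - D) x" by blast
      then show ?thesis using less.hyps[OF y(2) y(1)] by simp
    qed
  qed simp
  show ?case using ge le by simp
qed

lemma compose_restore:
  assumes H: "Hc H" and DH: "D \<subseteq> H"
    and down: "\<forall>x\<in>H. \<forall>y\<in>D. concurrent (fst x) (fst y) \<and> snd x < snd y \<longrightarrow> x \<in> D"
  shows "D \<union> dropon D (H - D) = H"
proof -
  have "dropon D (H - D) = H - D"
    unfolding dropon_def using lvl_restore[OF assms] by (auto simp: image_iff)
  then show ?thesis using DH by auto
qed

lemma lvl_self: "Hc Q \<Longrightarrow> dropon {} Q = Q"
  using compose_restore[of Q "{}"] by simp



definition rel :: "(int \<times> nat) set \<Rightarrow> int \<times> nat \<Rightarrow> int \<times> nat \<Rightarrow> bool" where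
  "rel H y z \<longleftrightarrow> y \<in> H \<and> z \<in> H \<and> concurrent (fst y) (fst z) \<and> snd y < snd z"

abbreviation abv :: "(int \<times> nat) set \<Rightarrow> int \<times> nat \<Rightarrow> int \<times> nat \<Rightarrow> bool" where
  "abv H \<equiv> (rel H)\<^sup>*\<^sup>*"

lemma abv_le: "abv H b x \<Longrightarrow> x = b \<or> (b \<in> H \<and> x \<in> H \<and> snd b < snd x)"
  by (induction rule: rtranclp_induct) (auto simp: rel_def)

lemma abv_last: "abv H b x \<Longrightarrow> x = b \<or> (\<exists>y. abv H b y \<and> rel H y x)"
  by (induction rule: rtranclp_induct) auto

lemma pyr_abv:
  assumes Q: "Hc Q" and c: "c \<in> Q" and bot: "\<forall>x\<in>Q. snd x = 0 \<longrightarrow> x = c"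
  shows "x \<in> Q \<Longrightarrow> abv Q c x"
proof (induction "snd x" arbitrary: x rule: less_induct)
  case less
  show ?case
  proof (cases "snd x = 0")
    case True
    then show ?thesis using bot less.prems by auto
  next
    case False
    then obtain y where y: "y \<in> Q" "concurrent (fst x) (fst y)" "snd y = snd x - 1"
      using Hc_supp[OF Q less.prems] by auto
    have "snd y < snd x" using y False by simp
    then have "abv Q c y" using less.hyps y(1) by blast
    moreover have "rel Q y x" using y less.prems \<open>snd y < snd x\<close> conc_sym by (auto simp: rel_def)
    ultimately show ?thesis by (rule rtranclp.rtrancl_into_rtrancl)
  qed
qed

lemma Hc_down:
  assumes H: "Hc H" and DH: "D \<subseteq> H"
    and down: "\<forall>x\<in>H. \<forall>y\<in>D. concurrent (fst x) (fst y) \<and> snd x < snd y \<longrightarrow> x \<in> D"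
  shows "Hc D"
  unfolding Hc_def
proof (intro conjI ballI impI)
  show "finite D" using Hc_fin[OF H] DH finite_subset by blast
next
  fix x y assume "x \<in> D" "y \<in> D" "x \<noteq> y \<and> concurrent (fst x) (fst y)"
  then show "snd x \<noteq> snd y" using Hc_dist[OF H] DH by blast
next
  fix y assume y: "y \<in> D" "0 < snd y"
  then obtain z where z: "z \<in> H" "concurrent (fst y) (fst z)" "snd z = snd y - 1"
    using Hc_supp[OF H] DH by blast
  have "z \<in> D" using down z y conc_sym by force
  then show "\<exists>z\<in>D. concurrent (fst y) (fst z) \<and> snd z = snd y - 1" using z by blast
qed

lemma pyramid_iff: "pyramid p \<longleftrightarrow> Hc p \<and> (\<exists>!x. x \<in> p \<and> snd x = 0)"
  by (simp add: pyramid_def heap_iff_Hc)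

lemma pyr_bot:
  assumes "pyramid p" "c \<in> p" "snd c = 0"
  shows "\<forall>x\<in>p. snd x = 0 \<longrightarrow> x = c"
  using assms unfolding pyramid_def by blast

definition Pyr :: "int \<Rightarrow> nat \<Rightarrow> (int \<times> nat) set set" where
  "Pyr s m = {p. pyramid p \<and> (s, 0) \<in> p \<and> heap_size p = m}"

definition Rt :: "nat \<Rightarrow> (int \<times> nat) set set" where
  "Rt k = {p. right_pyramid 0 p \<and> heap_size p = k}"

definition negs :: "(int \<times> nat) set \<Rightarrow> (int \<times> nat) set" where
  "negs p = {x\<in>p. fst x < 0}"

definition bb :: "(int \<times> nat) set \<Rightarrow> int \<times> nat" where
  "bb p = (-1, Min (snd ` negs p))"

definition Up :: "(int \<times> nat) set \<Rightarrow> (int \<times> nat) set" where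
  "Up p = {x. abv p (bb p) x}"

definition Dp :: "(int \<times> nat) set \<Rightarrow> (int \<times> nat) set" where
  "Dp p = p - Up p"

definition Qp :: "(int \<times> nat) set \<Rightarrow> (int \<times> nat) set" where
  "Qp p = dropon {} (Up p)"


lemma decomp:
  assumes pP: "p \<in> Pyr 0 m" and ne: "negs p \<noteq> {}"
  shows "Dp p \<in> Rt (card (Dp p))" "Qp p \<in> Pyr (-1) (m - card (Dp p))"
    "1 \<le> card (Dp p)" "card (Dp p) < m"
    "Dp p \<union> dropon (Dp p) (Qp p) = p"
proof -
  have pyr: "pyramid p" and z: "(0,0) \<in> p" and sz: "card p = m"
    using pP by (auto simp: Pyr_def heap_size_def)
  have H: "Hc p" using pyr pyramid_iff by blast
  have fin: "finite p" using Hc_fin[OF H] .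
  have bot: "\<forall>x\<in>p. snd x = 0 \<longrightarrow> x = (0,0)" using pyr_bot[OF pyr z] by simp
  let ?N = "negs p"
  define h1 where "h1 = Min (snd ` ?N)"
  have finN: "finite ?N" using fin by (simp add: negs_def)
  have "h1 \<in> snd ` ?N" unfolding h1_def using finN ne by simp
  then obtain x0 where x0: "x0 \<in> p" "fst x0 < 0" "snd x0 = h1" by (auto simp: negs_def)
  have minle: "h1 \<le> snd x" if "x \<in> p" "fst x < 0" for x
    unfolding h1_def using finN that by (simp add: negs_def)
  have h1pos: "0 < h1"
  proof (rule ccontr)
    assume "\<not> 0 < h1"
    then have "x0 = (0,0)" using bot x0 by simp
    then show False using x0 by simp
  qed
  obtain y where y: "y \<in> p" "concurrent (fst x0) (fst y)" "snd y = snd x0 - 1"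
    using Hc_supp[OF H x0(1)] h1pos x0 by auto
  have "\<not> fst y < 0"
  proof
    assume "fst y < 0"
    then have "h1 \<le> snd y" using minle y(1) by blast
    then show False using y(3) x0(3) h1pos by simp
  qed
  then have "fst x0 = -1" using y(2) x0(2) by (auto simp: conc_iff)
  then have b_eq: "bb p = x0" using x0 by (cases x0) (simp add: bb_def h1_def)
  have bp: "bb p \<in> p" using b_eq x0 by simp
  have sb: "snd (bb p) = h1" using b_eq x0 by simp
  have fb: "fst (bb p) = -1" using b_eq \<open>fst x0 = -1\<close> by simp
  have F2: "x \<in> p \<Longrightarrow> fst x < 0 \<Longrightarrow> abv p (bb p) x" for x
  proof (induction "snd x" arbitrary: x rule: less_induct)
    case less
    show ?case
    proof (cases "x = bb p")
      case True then show ?thesis by simp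
    next
      case xb: False
      show ?thesis
      proof (cases "fst x = -1")
        case True
        have "snd x \<noteq> h1" using xb True fb sb by (cases x, cases "bb p") auto
        then have "h1 < snd x" using minle[OF less.prems] by simp
        then have "rel p (bb p) x" using less.prems bp True fb sb by (simp add: rel_def)
        then show ?thesis by blast
      next
        case False
        then have fx: "fst x \<le> -2" using less.prems by simp
        have "snd x \<noteq> 0"
        proof
          assume "snd x = 0"
          then have "x = (0,0)" using bot less.prems(1) by blast
          then show False using less.prems(2) by simp
        qed
        then obtain w where w: "w \<in> p" "concurrent (fst x) (fst w)" "snd w = snd x - 1"
          using Hc_supp[OF H less.prems(1)] by auto
        have fw: "fst w < 0" using w(2) fx by (simp add: conc_iff)
        have lt: "snd w < snd x" using w \<open>snd x \<noteq> 0\<close> by simp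
        have "abv p (bb p) w" using less.hyps[OF lt w(1) fw] .
        moreover have "rel p w x" using w less.prems lt conc_sym by (auto simp: rel_def)
        ultimately show ?thesis by (rule rtranclp.rtrancl_into_rtrancl)
      qed
    qed
  qed
  let ?U = "Up p" and ?D = "Dp p"
  have Usub: "?U \<subseteq> p"
  proof
    fix x assume "x \<in> ?U"
    then have "abv p (bb p) x" by (simp add: Up_def)
    then show "x \<in> p" using abv_le[of p "bb p" x] bp by blast
  qed
  have bU: "bb p \<in> ?U" by (simp add: Up_def)
  have zU: "(0,0) \<notin> ?U"
  proof
    assume "(0,0) \<in> ?U"
    then have "abv p (bb p) (0,0)" by (simp add: Up_def)
    then have "(0,0) = bb p \<or> snd (bb p) < snd (0::int,0::nat)" using abv_le by blast
    moreover have "(0,0) \<noteq> bb p" using fb by (metis fst_conv zero_neq_neg_one)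
    ultimately show False by simp
  qed
  have down: "\<forall>x\<in>p. \<forall>y\<in>?D. concurrent (fst x) (fst y) \<and> snd x < snd y \<longrightarrow> x \<in> ?D"
  proof (intro ballI impI)
    fix x y assume x: "x \<in> p" and y: "y \<in> ?D" and c: "concurrent (fst x) (fst y) \<and> snd x < snd y"
    show "x \<in> ?D"
    proof (rule ccontr)
      assume "x \<notin> ?D"
      then have "abv p (bb p) x" using x by (simp add: Dp_def Up_def)
      moreover have "rel p x y" using x y c by (simp add: rel_def Dp_def)
      ultimately have "abv p (bb p) y" by (rule rtranclp.rtrancl_into_rtrancl)
      then show False using y by (simp add: Dp_def Up_def)
    qed
  qed
  have DH: "?D \<subseteq> p" by (auto simp: Dp_def)
  have HD: "Hc ?D" by (rule Hc_down[OF H DH down])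
  have zD: "(0,0) \<in> ?D" using z zU by (simp add: Dp_def)
  have Dnn: "0 \<le> fst x" if "x \<in> ?D" for x
  proof (rule ccontr)
    assume "\<not> 0 \<le> fst x"
    then have "abv p (bb p) x" using F2[of x] that DH by auto
    then show False using that by (simp add: Dp_def Up_def)
  qed
  have "\<exists>!x. x \<in> ?D \<and> snd x = 0"
    by (rule ex1I[of _ "(0,0)"]) (use zD bot DH in auto)
  then have "pyramid ?D" unfolding pyramid_iff using HD by blast
  then show D1: "?D \<in> Rt (card ?D)"
    using zD Dnn by (auto simp: Rt_def right_pyramid_def heap_size_def)
  have wU: "wq ?U" using Hc_wq[OF H] Usub unfolding wq_def by (meson finite_subset subsetD)
  have fU: "finite ?U" using wU by (simp add: wq_def)
  have HQ: "Hc (Qp p)" using Hc_compose(1)[of "{}" ?U] wU by (simp add: Qp_def Hc_def)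
  have lb0: "lvl {} ?U (bb p) = 0"
  proof (rule ccontr)
    assume "lvl {} ?U (bb p) \<noteq> 0"
    then have "0 < lvl {} ?U (bb p)" by simp
    from lvl_pos[OF _ fU this] obtain w where w: "w \<in> ?U" "snd w < snd (bb p)" by auto
    then show False using abv_le[of p "bb p" w] by (auto simp: Up_def)
  qed
  have mQ: "(-1, 0) \<in> Qp p" using bU lb0 fb unfolding Qp_def dropon_def
    by (intro image_eqI[of _ _ "bb p"]) auto
  have uQ: "\<forall>x\<in>Qp p. snd x = 0 \<longrightarrow> x = (-1,0)"
  proof (intro ballI impI)
    fix q assume q: "q \<in> Qp p" "snd q = 0"
    then obtain x where x: "x \<in> ?U" "q = (fst x, lvl {} ?U x)" by (auto simp: Qp_def dropon_def)
    show "q = (-1,0)"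
    proof (cases "x = bb p")
      case True then show ?thesis using x lb0 fb by simp
    next
      case False
      then obtain w where w: "abv p (bb p) w" "rel p w x" using abv_last[of p "bb p" x] x by (auto simp: Up_def)
      have "w \<in> ?U" using w by (simp add: Up_def)
      then have "lvl {} ?U w < lvl {} ?U x"
        using lvl_Q[of "{}" ?U w x] fU w(2) conc_sym by (auto simp: rel_def)
      then show ?thesis using x q by simp
    qed
  qed
  have cardQ: "card (Qp p) = card ?U"
    unfolding Qp_def dropon_def using lvl_inj[OF _ wU] by (simp add: card_image)
  have cardp: "card p = card ?D + card ?U"
    proof -
    have "finite ?U" using fU .
    then have "card (p - ?U) = card p - card ?U" using Usub by (rule card_Diff_subset)
    moreover have "card ?U \<le> card p" using card_mono[OF fin Usub] .
    ultimately show ?thesis unfolding Dp_def by linarith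
  qed
  have "\<exists>!x. x \<in> Qp p \<and> snd x = 0"
  proof (rule ex1I[of _ "(-1,0)"])
    show "(-1,0) \<in> Qp p \<and> snd (-1::int,0::nat) = 0" using mQ by simp
  next
    fix y assume "y \<in> Qp p \<and> snd y = 0"
    then show "y = (-1,0)" using uQ by blast
  qed
  then have "pyramid (Qp p)" unfolding pyramid_iff using HQ by blast
  moreover have "card (Qp p) = m - card ?D" using cardQ cardp sz by linarith
  ultimately show "Qp p \<in> Pyr (-1) (m - card ?D)"
    using mQ unfolding Pyr_def heap_size_def by blast
  have fD: "finite ?D" using fin DH finite_subset by blast
  have "0 < card ?D" using zD fD card_gt_0_iff by blast
  then show "1 \<le> card ?D" by simp
  have "0 < card ?U" using bU fU card_gt_0_iff by blast
  then show "card ?D < m" using cardp sz by linarith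
  have "dropon ?D (Qp p) = dropon ?D ?U"
    unfolding Qp_def by (rule dropon_dropon[OF fD _ wU]) simp
  moreover have "?U = p - ?D" using Usub unfolding Dp_def by blast
  ultimately show "?D \<union> dropon ?D (Qp p) = p"
    using compose_restore[OF H DH down] by simp
qed



lemma abv_map:
  assumes fD: "finite D" and wQ: "wq Q"
  shows "abv Q a x \<Longrightarrow> a \<in> Q \<Longrightarrow>
    abv (D \<union> dropon D Q) (fst a, lvl D Q a) (fst x, lvl D Q x)"
proof (induction rule: rtranclp_induct)
  case base
  then show ?case by simp
next
  case (step y z)
  have fQ: "finite Q" using wQ by (simp add: wq_def)
  have yz: "y \<in> Q" "z \<in> Q" "concurrent (fst y) (fst z)" "snd y < snd z" using step.hyps(2) by (auto simp: rel_def)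
  have "lvl D Q y < lvl D Q z" using lvl_Q[OF fD fQ yz(1)] yz(3) yz(4) conc_sym by blast
  then have "rel (D \<union> dropon D Q) (fst y, lvl D Q y) (fst z, lvl D Q z)"
    using yz unfolding rel_def dropon_def by auto
  with step.IH[OF step.prems] show ?case by (rule rtranclp.rtrancl_into_rtrancl)
qed

lemma abv_closed:
  assumes fD: "finite D" and fQ: "finite Q"
  shows "abv (D \<union> dropon D Q) a z \<Longrightarrow> a \<in> dropon D Q \<Longrightarrow> z \<in> dropon D Q"
proof (induction rule: rtranclp_induct)
  case base
  then show ?case by simp
next
  case (step y z)
  have y: "y \<in> dropon D Q" using step.IH step.prems by blast
  then obtain w where w: "w \<in> Q" "y = (fst w, lvl D Q w)" by (auto simp: dropon_def)
  have r: "z \<in> D \<union> dropon D Q" "concurrent (fst y) (fst z)" "snd y < snd z"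
    using step.hyps(2) by (auto simp: rel_def)
  show ?case
  proof (rule ccontr)
    assume "z \<notin> dropon D Q"
    then have "z \<in> D" using r by blast
    then have "snd z < lvl D Q w" using lvl_B[OF fD fQ _, of z w] r(2) w by simp
    then show False using r(3) w by simp
  qed
qed

lemma comp:
  assumes DR: "D \<in> Rt k" and QP: "Q \<in> Pyr (-1) n"
  shows "D \<union> dropon D Q \<in> Pyr 0 (k + n)" "negs (D \<union> dropon D Q) \<noteq> {}"
    "Dp (D \<union> dropon D Q) = D" "Qp (D \<union> dropon D Q) = Q"
proof -
  have pD: "pyramid D" and zD: "(0,0) \<in> D" and Dnn: "\<forall>x\<in>D. 0 \<le> fst x" and cD: "card D = k"
    using DR by (auto simp: Rt_def right_pyramid_def heap_size_def)
  have pQ: "pyramid Q" and zQ: "(-1,0) \<in> Q" and cQ: "card Q = n"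
    using QP by (auto simp: Pyr_def heap_size_def)
  have HD: "Hc D" using pD pyramid_iff by blast
  have HQ: "Hc Q" using pQ pyramid_iff by blast
  have botD: "\<forall>x\<in>D. snd x = 0 \<longrightarrow> x = (0,0)" using pyr_bot[OF pD zD] by simp
  have botQ: "\<forall>x\<in>Q. snd x = 0 \<longrightarrow> x = (-1,0)" using pyr_bot[OF pQ zQ] by simp
  have fD: "finite D" using Hc_fin[OF HD] .
  have fQ: "finite Q" using Hc_fin[OF HQ] .
  have wQ: "wq Q" using Hc_wq[OF HQ] .
  let ?I = "dropon D Q"
  let ?H = "D \<union> ?I"
  have HH: "Hc ?H" using Hc_compose(1)[OF HD wQ] .
  have disj: "D \<inter> ?I = {}" using Hc_compose(2)[OF HD wQ] .
  have pos: "0 < lvl D Q x" if xQ: "x \<in> Q" for x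
  proof (cases "snd x = 0")
    case True
    then have "x = (-1,0)" using botQ xQ by blast
    then show ?thesis using lvl_B[OF fD fQ zD, of x] by (simp add: conc_iff)
  next
    case False
    then obtain y where y: "y \<in> Q" "concurrent (fst x) (fst y)" "snd y = snd x - 1"
      using Hc_supp[OF HQ xQ] by auto
    then have "lvl D Q y < lvl D Q x" using lvl_Q[OF fD fQ y(1) y(2)] False by simp
    then show ?thesis by simp
  qed
  have botH: "\<forall>x\<in>?H. snd x = 0 \<longrightarrow> x = (0,0)"
  proof (intro ballI impI)
    fix x assume x: "x \<in> ?H" "snd x = 0"
    show "x = (0,0)"
    proof (cases "x \<in> D")
      case True then show ?thesis using botD x by blast
    next
      case False
      then obtain w where "w \<in> Q" "x = (fst w, lvl D Q w)" using x by (auto simp: dropon_def)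
      then show ?thesis using pos[of w] x by simp
    qed
  qed
  have "\<exists>!x. x \<in> ?H \<and> snd x = 0"
  proof (rule ex1I[of _ "(0,0)"])
    show "(0,0) \<in> ?H \<and> snd (0::int,0::nat) = 0" using zD by simp
  next
    fix y assume "y \<in> ?H \<and> snd y = 0"
    then show "y = (0,0)" using botH by blast
  qed
  then have pH: "pyramid ?H" unfolding pyramid_iff using HH by blast
  have cI: "card ?I = n" unfolding dropon_def using lvl_inj[OF fD wQ] cQ by (simp add: card_image)
  have fI: "finite ?I" unfolding dropon_def using fQ by simp
  have "card ?H = k + n" using card_Un_disjoint[OF fD fI disj] cD cI by simp
  then show "?H \<in> Pyr 0 (k + n)" using pH zD unfolding Pyr_def heap_size_def by blast
  define c where "c = (fst (-1::int,0::nat), lvl D Q (-1,0))"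
  have cI': "c \<in> ?I" unfolding c_def dropon_def using zQ by blast
  have fc: "fst c = -1" by (simp add: c_def)
  have negs_eq: "negs ?H = {z\<in>?I. fst z < 0}"
    using Dnn unfolding negs_def by force
  have cN: "c \<in> negs ?H" using cI' fc negs_eq by simp
  then show "negs ?H \<noteq> {}" by blast
  have ab: "abv ?H c (fst x, lvl D Q x)" if "x \<in> Q" for x
    unfolding c_def using abv_map[OF fD wQ pyr_abv[OF HQ zQ botQ that] zQ] .
  have le: "snd c \<le> snd z" if "z \<in> negs ?H" for z
  proof -
    have "z \<in> ?I" using that negs_eq by blast
    then obtain x where x: "x \<in> Q" "z = (fst x, lvl D Q x)" by (auto simp: dropon_def)
    then have "abv ?H c z" using ab by simp
    then show ?thesis using abv_le by fastforce
  qed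
  have finN: "finite (negs ?H)" using fI negs_eq by simp
  have "Min (snd ` negs ?H) = snd c"
    by (rule Min_eqI) (use finN cN le in auto)
  then have bH: "bb ?H = c" unfolding bb_def using fc by (cases c) simp
  have UH: "Up ?H = ?I"
  proof (intro equalityI subsetI)
    fix z assume "z \<in> Up ?H"
    then have "abv ?H c z" using bH by (simp add: Up_def)
    then show "z \<in> ?I" using abv_closed[OF fD fQ] cI' by blast
  next
    fix z assume "z \<in> ?I"
    then obtain x where x: "x \<in> Q" "z = (fst x, lvl D Q x)" by (auto simp: dropon_def)
    then show "z \<in> Up ?H" using ab bH by (simp add: Up_def)
  qed
  show "Dp ?H = D" unfolding Dp_def UH using disj by blast
  show "Qp ?H = Q" unfolding Qp_def UH
    using dropon_dropon[of "{}" D Q] fD wQ lvl_self[OF HQ] by simp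
qed



definition rfx :: "int \<times> nat \<Rightarrow> int \<times> nat" where
  "rfx x = (-1 - fst x, snd x)"

definition rf :: "(int \<times> nat) set \<Rightarrow> (int \<times> nat) set" where
  "rf p = rfx ` p"

lemma rfx_rfx[simp]: "rfx (rfx x) = x"
  by (simp add: rfx_def)

lemma rf_rf[simp]: "rf (rf p) = p"
  by (simp add: rf_def image_image)

lemma inj_rfx: "inj rfx"
  by (metis injI rfx_rfx)

lemma card_rf[simp]: "card (rf p) = card p"
  unfolding rf_def using inj_rfx by (simp add: card_image inj_on_subset)

lemma conc_rf: "concurrent (-1 - a) (-1 - b) \<longleftrightarrow> concurrent a b"
  by (simp add: conc_iff abs_minus_commute)

lemma Hc_rf:
  assumes H: "Hc p" shows "Hc (rf p)"
  unfolding Hc_def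
proof (intro conjI ballI impI)
  show "finite (rf p)" using Hc_fin[OF H] by (simp add: rf_def)
next
  fix x y assume x: "x \<in> rf p" and y: "y \<in> rf p" and c: "x \<noteq> y \<and> concurrent (fst x) (fst y)"
  have a: "rfx x \<in> p" using x unfolding rf_def by (metis image_iff rfx_rfx)
  have b: "rfx y \<in> p" using y unfolding rf_def by (metis image_iff rfx_rfx)
  have ne: "rfx x \<noteq> rfx y" using c by (metis rfx_rfx)
  have cc: "concurrent (fst (rfx x)) (fst (rfx y))" using c unfolding rfx_def fst_conv conc_rf by simp
  have "snd (rfx x) \<noteq> snd (rfx y)" using Hc_dist[OF H a b ne cc] .
  then show "snd x \<noteq> snd y" unfolding rfx_def by simp
next
  fix x assume x: "x \<in> rf p" and pos: "0 < snd x"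
  have a: "rfx x \<in> p" using x unfolding rf_def by (metis image_iff rfx_rfx)
  have "0 < snd (rfx x)" using pos unfolding rfx_def by simp
  then obtain b where b: "b \<in> p" "concurrent (fst (rfx x)) (fst b)" "snd b = snd (rfx x) - 1"
    using Hc_supp[OF H a] by blast
  have "rfx b \<in> rf p" using b unfolding rf_def by blast
  moreover have "concurrent (fst x) (fst (rfx b))"
  proof -
    have "concurrent (-1 - fst x) (-1 - (-1 - fst b))" using b(2) unfolding rfx_def by simp
    then show ?thesis unfolding conc_rf rfx_def by simp
  qed
  moreover have "snd (rfx b) = snd x - 1" using b(3) unfolding rfx_def by simp
  ultimately show "\<exists>y\<in>rf p. concurrent (fst x) (fst y) \<and> snd y = snd x - 1" by blast
qed

lemma mem_rf: "x \<in> rf p \<longleftrightarrow> rfx x \<in> p"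
  unfolding rf_def by (metis image_iff rfx_rfx)

lemma pyramid_rf: "pyramid p \<Longrightarrow> pyramid (rf p)"
proof -
  assume "pyramid p"
  then have H: "Hc p" and u: "\<exists>!x. x \<in> p \<and> snd x = 0" unfolding pyramid_iff by blast+
  obtain c where c: "c \<in> p" "snd c = 0" "\<forall>x\<in>p. snd x = 0 \<longrightarrow> x = c" using u by blast
  have c1: "rfx c \<in> rf p" using c(1) unfolding mem_rf rfx_rfx .
  have c2: "snd (rfx c) = 0" using c(2) unfolding rfx_def snd_conv .
  have c3: "y = rfx c" if "y \<in> rf p" "snd y = 0" for y
  proof -
    have "rfx y \<in> p" using that(1) unfolding mem_rf .
    moreover have "snd (rfx y) = 0" using that(2) unfolding rfx_def snd_conv .
    ultimately have "rfx y = c" using c(3) by blast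
    then show ?thesis by (metis rfx_rfx)
  qed
  have "\<exists>!x. x \<in> rf p \<and> snd x = 0" using c1 c2 c3 by blast
  then show ?thesis using Hc_rf[OF H] unfolding pyramid_iff by blast
qed

lemma left_right_rf: "left_pyramid 1 p \<longleftrightarrow> right_pyramid 0 (rf p)"
proof -
  have a: "(\<forall>(t,h)\<in>p. t \<le> -1) \<longleftrightarrow> (\<forall>(t,h)\<in>rf p. 0 \<le> t)"
    unfolding rf_def rfx_def by auto
  have b: "(-1, 0) \<in> p \<longleftrightarrow> (0,0) \<in> rf p" by (simp add: mem_rf rfx_def)
  show ?thesis
    unfolding left_pyramid_def right_pyramid_def piece_len_def using a b pyramid_rf[of p] pyramid_rf[of "rf p"]
    by auto
qed

lemma right_left_rf: "right_pyramid 0 p \<longleftrightarrow> left_pyramid 1 (rf p)"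
  using left_right_rf[of "rf p"] by simp

lemma Pyr_rf: "p \<in> Pyr (-1) n \<Longrightarrow> rf p \<in> Pyr 0 n"
  unfolding Pyr_def heap_size_def using pyramid_rf by (auto simp: mem_rf rfx_def)

lemma Pyr_rf2: "p \<in> Pyr 0 n \<Longrightarrow> rf p \<in> Pyr (-1) n"
  unfolding Pyr_def heap_size_def using pyramid_rf by (auto simp: mem_rf rfx_def)

definition Sig :: "(nat \<Rightarrow> 'a set) \<Rightarrow> nat \<Rightarrow> (nat \<times> (int \<times> nat) set \<times> 'a) set" where
  "Sig X m = Sigma {1..<m} (\<lambda>k. Rt k \<times> X (m - k))"

lemma Rt_Pyr: "p \<in> Rt m \<Longrightarrow> p \<in> Pyr 0 m"
  by (auto simp: Rt_def Pyr_def right_pyramid_def)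

lemma Rt_negs: "p \<in> Rt m \<Longrightarrow> negs p = {}"
  by (auto simp: Rt_def right_pyramid_def negs_def)

lemma heap_bij: "Pyr 0 m \<approx> Rt m <+> Sig (Pyr 0) m"
  unfolding eqpoll_def
proof
  let ?f = "\<lambda>p. if negs p = {} then Inl p else Inr (card (Dp p), Dp p, rf (Qp p))"
  let ?g = "case_sum (\<lambda>p. p) (\<lambda>(k, D, Q). D \<union> dropon D (rf Q))"
  show "bij_betw ?f (Pyr 0 m) (Rt m <+> Sig (Pyr 0) m)"
  proof (rule bij_betw_byWitness[where f' = ?g])
    show "\<forall>a\<in>Pyr 0 m. ?g (?f a) = a"
    proof
      fix p assume p: "p \<in> Pyr 0 m"
      show "?g (?f p) = p"
      proof (cases "negs p = {}")
        case False
        then show ?thesis using decomp(5)[OF p False] by simp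
      qed simp
    qed
    show "\<forall>a'\<in>Rt m <+> Sig (Pyr 0) m. ?f (?g a') = a'"
    proof
      fix b assume b: "b \<in> Rt m <+> Sig (Pyr 0) m"
      show "?f (?g b) = b"
      proof (cases b)
        case (Inl p)
        then show ?thesis using Rt_negs b by auto
      next
        case (Inr r)
        then obtain k D Q where r: "b = Inr (k, D, Q)" "k \<in> {1..<m}" "D \<in> Rt k" "Q \<in> Pyr 0 (m - k)"
          using b by (cases r) (auto simp: Sig_def)
        have Q': "rf Q \<in> Pyr (-1) (m - k)" using Pyr_rf2[OF r(4)] .
        have cD: "card D = k" using r(3) by (simp add: Rt_def heap_size_def)
        show ?thesis using comp[OF r(3) Q'] r(1) cD by simp
      qed
    qed
    show "?f ` Pyr 0 m \<subseteq> Rt m <+> Sig (Pyr 0) m"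
    proof
      fix z assume "z \<in> ?f ` Pyr 0 m"
      then obtain p where p: "p \<in> Pyr 0 m" "z = ?f p" by blast
      show "z \<in> Rt m <+> Sig (Pyr 0) m"
      proof (cases "negs p = {}")
        case True
        then have "p \<in> Rt m" using p(1)
          by (auto simp: Rt_def Pyr_def right_pyramid_def negs_def not_less)
        then show ?thesis using p True by (simp add: Plus_def)
      next
        case False
        note d = decomp[OF p(1) False]
        have "rf (Qp p) \<in> Pyr 0 (m - card (Dp p))" using Pyr_rf[OF d(2)] .
        then have "(card (Dp p), Dp p, rf (Qp p)) \<in> Sig (Pyr 0) m"
          using d(1,3,4) by (simp add: Sig_def)
        then show ?thesis using p False by (simp add: Plus_def)
      qed
    qed
    show "?g ` (Rt m <+> Sig (Pyr 0) m) \<subseteq> Pyr 0 m"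
    proof
      fix z assume "z \<in> ?g ` (Rt m <+> Sig (Pyr 0) m)"
      then obtain b where b: "b \<in> Rt m <+> Sig (Pyr 0) m" "z = ?g b" by blast
      show "z \<in> Pyr 0 m"
      proof (cases b)
        case (Inl p)
        then show ?thesis using b Rt_Pyr by auto
      next
        case (Inr r)
        then obtain k D Q where r: "b = Inr (k, D, Q)" "k \<in> {1..<m}" "D \<in> Rt k" "Q \<in> Pyr 0 (m - k)"
          using b by (cases r) (auto simp: Sig_def)
        have Q': "rf Q \<in> Pyr (-1) (m - k)" using Pyr_rf2[OF r(4)] .
        have "k + (m - k) = m" using r(2) by simp
        then show ?thesis using comp(1)[OF r(3) Q'] r(1) b(2) by simp
      qed
    qed
  qed
qed



definition alt :: "(int \<times> nat) set list \<Rightarrow> bool" where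
  "alt ps \<longleftrightarrow> (\<forall>i < length ps. if even i then right_pyramid 0 (ps ! i) else left_pyramid 1 (ps ! i))"

definition Sq :: "nat \<Rightarrow> (int \<times> nat) set list set" where
  "Sq m = {ps. length ps \<ge> 1 \<and> alt ps \<and> sum_list (map heap_size ps) = m}"

lemma alt_cons: "alt (p # qs) \<longleftrightarrow> right_pyramid 0 p \<and> alt (map rf qs)"
proof -
  have e: "(if even (Suc j) then right_pyramid 0 ((p # qs) ! Suc j) else left_pyramid 1 ((p # qs) ! Suc j))
      \<longleftrightarrow> (if even j then right_pyramid 0 (map rf qs ! j) else left_pyramid 1 (map rf qs ! j))"
    if "j < length qs" for j
  proof (cases "even j")
    case True
    have "left_pyramid 1 (qs ! j) \<longleftrightarrow> right_pyramid 0 (rf (qs ! j))" by (rule left_right_rf)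
    then show ?thesis using True that by simp
  next
    case False
    have "right_pyramid 0 (qs ! j) \<longleftrightarrow> left_pyramid 1 (rf (qs ! j))" by (rule right_left_rf)
    then show ?thesis using False that by simp
  qed
  show ?thesis
    unfolding alt_def length_Cons All_less_Suc2 using e by simp
qed

lemma pyr_size: "pyramid q \<Longrightarrow> 1 \<le> heap_size q"
proof -
  assume "pyramid q"
  then have "Hc q" "\<exists>x. x \<in> q" unfolding pyramid_iff by blast+
  then have "finite q" "q \<noteq> {}" using Hc_fin by blast+
  then show ?thesis unfolding heap_size_def by (simp add: Suc_leI card_gt_0_iff)
qed

lemma alt_pyr: "alt ps \<Longrightarrow> q \<in> set ps \<Longrightarrow> pyramid q"
  unfolding alt_def in_set_conv_nth right_pyramid_def left_pyramid_def by metis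

lemma hs_rf: "map heap_size (map rf qs) = map heap_size qs"
  by (induction qs) (auto simp: heap_size_def)

lemma alt_sum: "alt qs \<Longrightarrow> qs \<noteq> [] \<Longrightarrow> 1 \<le> sum_list (map heap_size qs)"
proof -
  assume a: "alt qs" "qs \<noteq> []"
  then have "hd qs \<in> set qs" by simp
  then have "1 \<le> heap_size (hd qs)" using alt_pyr[OF a(1)] pyr_size by blast
  moreover have "heap_size (hd qs) \<le> sum_list (map heap_size qs)"
    using \<open>hd qs \<in> set qs\<close> by (simp add: member_le_sum_list)
  ultimately show ?thesis by simp
qed

lemma Sq_cons: "p # qs \<in> Sq m \<longleftrightarrow> right_pyramid 0 p \<and> alt (map rf qs) \<and> heap_size p + sum_list (map heap_size (map rf qs)) = m"
  unfolding Sq_def by (simp add: alt_cons hs_rf del: map_map)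

lemma seq_bij: "Sq m \<approx> Rt m <+> Sig Sq m"
  unfolding eqpoll_def
proof
  let ?f = "\<lambda>ps. if tl ps = [] then Inl (hd ps) else Inr (heap_size (hd ps), hd ps, map rf (tl ps))"
  let ?g = "case_sum (\<lambda>p. [p]) (\<lambda>(k, p, qs). p # map rf qs)"
  have mf: "?f ps \<in> Rt m <+> Sig Sq m \<and> ?g (?f ps) = ps" if ps: "ps \<in> Sq m" for ps
  proof -
    obtain p qs where pq: "ps = p # qs" using ps by (cases ps) (auto simp: Sq_def)
    have c: "right_pyramid 0 p" "alt (map rf qs)" "heap_size p + sum_list (map heap_size (map rf qs)) = m"
      using ps unfolding pq Sq_cons by blast+
    show ?thesis
    proof (cases "qs = []")
      case True
      then have "p \<in> Rt m" using c by (simp add: Rt_def)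
      then show ?thesis using pq True by (simp add: Plus_def)
    next
      case False
      have s1: "1 \<le> sum_list (map heap_size (map rf qs))" using alt_sum[OF c(2)] False by simp
      have k1: "1 \<le> heap_size p" using c(1) pyr_size by (simp add: right_pyramid_def)
      have "map rf qs \<in> Sq (m - heap_size p)" using c s1 False unfolding Sq_def
        by (auto simp: Suc_leI)
      moreover have "p \<in> Rt (heap_size p)" using c by (simp add: Rt_def)
      moreover have "heap_size p \<in> {1..<m}" using k1 s1 c(3) by simp
      ultimately have "(heap_size p, p, map rf qs) \<in> Sig Sq m" by (simp add: Sig_def)
      then show ?thesis using pq False by (simp add: Plus_def comp_def)
    qed
  qed
  have mg: "?g b \<in> Sq m \<and> ?f (?g b) = b" if b: "b \<in> Rt m <+> Sig Sq m" for b
  proof (cases b)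
    case (Inl p)
    then have "p \<in> Rt m" using b by auto
    then show ?thesis using Inl by (simp add: Sq_def alt_def Rt_def)
  next
    case (Inr r)
    then obtain k p qs where r: "b = Inr (k, p, qs)" "k \<in> {1..<m}" "p \<in> Rt k" "qs \<in> Sq (m - k)"
      using b by (cases r) (auto simp: Sig_def)
    have q: "length qs \<ge> 1" "alt qs" "sum_list (map heap_size qs) = m - k" using r(4) by (auto simp: Sq_def)
    have "p # map rf qs \<in> Sq m"
      unfolding Sq_cons using r(2,3) q by (simp add: Rt_def comp_def)
    moreover have "map rf qs \<noteq> []" using q(1) by auto
    ultimately show ?thesis using r(1,3) by (simp add: Rt_def comp_def)
  qed
  show "bij_betw ?f (Sq m) (Rt m <+> Sig Sq m)"
  proof (rule bij_betw_byWitness[where f' = ?g])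
    show "\<forall>a\<in>Sq m. ?g (?f a) = a" using mf by blast
    show "\<forall>a'\<in>Rt m <+> Sig Sq m. ?f (?g a') = a'" using mg by blast
    show "?f ` Sq m \<subseteq> Rt m <+> Sig Sq m" using mf by blast
    show "?g ` (Rt m <+> Sig Sq m) \<subseteq> Sq m" using mg by blast
  qed
qed

lemma main_eqpoll: "Pyr 0 m \<approx> Sq m"
proof (induction m rule: less_induct)
  case (less m)
  have IHk: "Rt k \<times> Pyr 0 (m - k) \<approx> Rt k \<times> Sq (m - k)" if "k \<in> {1..<m}" for k
  proof -
    have "m - k < m" using that by simp
    then show ?thesis using less.IH by (simp add: times_eqpoll_cong)
  qed
  have "Sig (Pyr 0) m \<approx> Sig Sq m"
    unfolding Sig_def by (rule Sigma_eqpoll_cong[OF bij_betw_id]) (simp add: IHk)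
  then have "Rt m <+> Sig (Pyr 0) m \<approx> Rt m <+> Sig Sq m"
    by (simp add: sum_eqpoll_cong)
  then show ?case
    using heap_bij[of m] seq_bij[of m] eqpoll_trans eqpoll_sym by metis
qed


theorem lemma1:
  fixes m :: nat
  assumes "m \<ge> 1"
  shows "\<exists>f. bij_betw f
     {p. pyramid p \<and> (0, 0) \<in> p \<and> heap_size p = m}
     {ps. length ps \<ge> 1
          \<and> (\<forall>i < length ps. if even i then right_pyramid 0 (ps ! i) else left_pyramid 1 (ps ! i))
          \<and> sum_list (map heap_size ps) = m}"
proof -
  have "Pyr 0 m \<approx> Sq m" by (rule main_eqpoll)
  then show ?thesis unfolding eqpoll_def Pyr_def Sq_def alt_def .
qed

end
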